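(* Consider the following protocol. (1) Alice chooses $a\in\{0,1\}$ uniformly at random, prepares the two-qutrit state $\frac1{\sqrt2}|aa\rangle+\frac1{\sqrt2}|22\rangle$, and sends the second qutrit to Bob. (2) Bob chooses $x_0,x_1\in\{0,1\}$ uniformly at random, applies to the received qutrit the unitary $|0\rangle\mapsto(-1)^{x_0}|0\rangle$, $|1\rangle\mapsto(-1)^{x_1}|1\rangle$, $|2\rangle\mapsto|2\rangle$, and returns it to Alice. (3) Alice, who now holds $\frac{(-1)^{x_a}}{\sqrt2}|aa\rangle+\frac1{\sqrt2}|22\rangle$, performs a two-outcome measurement (depending on $a$) that reveals $x_a$ with certainty. Let $\delta\geq 0$ and $a\in\{0,1\}$. Suppose a cheating Alice, in place of step (1), prepares an arbitrary pure state $|\psi\rangle$ on a register of her own together with a qutrit, sends the qutrit to Bob, and that this state allows her (after Bob's step (2), with $x_0,x_1$ uniformly random) to guess $x_a$ correctly with probability at least $1-\delta$. Then $|\psi\rangle$ allows her to guess $x_{1-a}$ correctly with probability at most $\frac12+\sqrt{\delta(1-\delta)}+\delta$. In particular (taking $\delta=0$), $P^{\star}_{\mathrm{Alice}}=1/2$ for this protocol.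
   Context: $P^{\star}_{\mathrm{Alice}}$ denotes the maximum over $a\in\{0,1\}$ of the maximum, over cheating strategies of Alice that let her guess $x_a$ with certainty, of the probability that she correctly guesses $x_{1-a}$ and honest Bob, whose bits $x_0,x_1$ are uniformly random, does not abort. *)

theory Defs
  imports Complex_Main
begin

text \<open>Alice's register is C^d (d \<ge> 1 arbitrary), the qutrit is C^3.
  Basis states of the joint system are indexed by pairs (i,j), i < d, j < 3;
  a state vector is a function on such pairs, an operator a matrix indexed by pairs.\<close>

definition idx :: "nat \<Rightarrow> (nat \<times> nat) set" where
  "idx d = {..<d} \<times> {..<3}"

definition normalized :: "nat \<Rightarrow> (nat \<times> nat \<Rightarrow> complex) \<Rightarrow> bool" where
  "normalized d \<psi> \<longleftrightarrow> (\<Sum>p\<in>idx d. (cmod (\<psi> p))\<^sup>2) = 1"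

definition expect :: "nat \<Rightarrow> (nat \<times> nat \<Rightarrow> nat \<times> nat \<Rightarrow> complex) \<Rightarrow> (nat \<times> nat \<Rightarrow> complex) \<Rightarrow> complex" where
  "expect d E \<phi> = (\<Sum>p\<in>idx d. \<Sum>q\<in>idx d. cnj (\<phi> p) * E p q * \<phi> q)"

definition id_op :: "nat \<times> nat \<Rightarrow> nat \<times> nat \<Rightarrow> complex" where
  "id_op p q = (if p = q then 1 else 0)"

definition psd :: "nat \<Rightarrow> (nat \<times> nat \<Rightarrow> nat \<times> nat \<Rightarrow> complex) \<Rightarrow> bool" where
  "psd d E \<longleftrightarrow> (\<forall>\<phi>. Im (expect d E \<phi>) = 0 \<and> Re (expect d E \<phi>) \<ge> 0)"

text \<open>A two-outcome measurement (POVM) {I - E, E}: E is the effect of outcome 1, I - E that of outcome 0.\<close>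
definition effect :: "nat \<Rightarrow> (nat \<times> nat \<Rightarrow> nat \<times> nat \<Rightarrow> complex) \<Rightarrow> bool" where
  "effect d E \<longleftrightarrow> psd d E \<and> psd d (\<lambda>p q. id_op p q - E p q)"

definition sgn_bit :: "bool \<Rightarrow> complex" where
  "sgn_bit b = (if b then -1 else 1)"

definition bob_apply :: "bool \<Rightarrow> bool \<Rightarrow> (nat \<times> nat \<Rightarrow> complex) \<Rightarrow> (nat \<times> nat \<Rightarrow> complex)" where
  "bob_apply x0 x1 \<psi> = (\<lambda>(i, j). (if j = 0 then sgn_bit x0 else if j = 1 then sgn_bit x1 else 1) * \<psi> (i, j))"

definition sel :: "bool \<Rightarrow> bool \<Rightarrow> bool \<Rightarrow> bool" where
  "sel a x0 x1 = (if a then x1 else x0)"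

definition guess_prob :: "nat \<Rightarrow> (nat \<times> nat \<Rightarrow> complex) \<Rightarrow> (nat \<times> nat \<Rightarrow> nat \<times> nat \<Rightarrow> complex) \<Rightarrow> bool \<Rightarrow> real" where
  "guess_prob d \<psi> E a =
     (\<Sum>x0\<in>UNIV. \<Sum>x1\<in>UNIV.
        (1/4) * Re (expect d (if sel a x0 x1 then E else (\<lambda>p q. id_op p q - E p q)) (bob_apply x0 x1 \<psi>)))"

text \<open>P*_Alice: sup over a, cheating states psi (any dimension d of Alice's register) for which
  some measurement reveals x_a with certainty, of the probability of guessing x_{1-a}
  (honest Bob never aborts in this protocol).\<close>
definition P_star_Alice :: real where
  "P_star_Alice = Sup {guess_prob d \<psi> E' (\<not> a) | a d \<psi> E E'.
       0 < d \<and> normalized d \<psi> \<and> effect d E \<and> guess_prob d \<psi> E a = 1 \<and> effect d E'}"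

end

theory Submission
  imports Defs
begin

definition sesq :: "nat \<Rightarrow> (nat \<times> nat \<Rightarrow> nat \<times> nat \<Rightarrow> complex) \<Rightarrow> (nat \<times> nat \<Rightarrow> complex) \<Rightarrow> (nat \<times> nat \<Rightarrow> complex) \<Rightarrow> complex" where
  "sesq d E f g = (\<Sum>p\<in>idx d. \<Sum>q\<in>idx d. cnj (f p) * E p q * g q)"

definition nsq :: "nat \<Rightarrow> (nat \<times> nat \<Rightarrow> complex) \<Rightarrow> real" where
  "nsq d f = (\<Sum>p\<in>idx d. (cmod (f p))\<^sup>2)"

lemma finite_idx[simp]: "finite (idx d)" by (simp add: idx_def)

lemma expect_sesq: "expect d E f = sesq d E f f"
  by (simp add: expect_def sesq_def)

lemma sesq_add_left: "sesq d E (\<lambda>p. f p + g p) h = sesq d E f h + sesq d E g h"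
  by (simp add: sesq_def distrib_left distrib_right sum.distrib)

lemma sesq_add_right: "sesq d E h (\<lambda>p. f p + g p) = sesq d E h f + sesq d E h g"
  by (simp add: sesq_def distrib_left distrib_right sum.distrib)

lemma sesq_scale_left: "sesq d E (\<lambda>p. c * f p) h = cnj c * sesq d E f h"
  by (simp add: sesq_def sum_distrib_left mult.assoc)

lemma sesq_scale_right: "sesq d E h (\<lambda>p. c * f p) = c * sesq d E h f"
  by (simp add: sesq_def sum_distrib_left algebra_simps)

lemma sesq_minus_left: "sesq d E (\<lambda>p. f p - g p) h = sesq d E f h - sesq d E g h"
  by (simp add: sesq_def left_diff_distrib right_diff_distrib sum_subtractf)

lemma sesq_minus_right: "sesq d E h (\<lambda>p. f p - g p) = sesq d E h f - sesq d E h g"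
  by (simp add: sesq_def left_diff_distrib right_diff_distrib sum_subtractf)

lemma expect_id: "expect d id_op f = of_real (nsq d f)"
proof -
  have "expect d id_op f = (\<Sum>p\<in>idx d. cnj (f p) * f p)"
    unfolding expect_def id_op_def
  proof (rule sum.cong[OF refl])
    fix p assume p: "p \<in> idx d"
    have "(\<Sum>q\<in>idx d. cnj (f p) * (if p = q then 1 else 0) * f q) = (\<Sum>q\<in>idx d. if p = q then cnj (f p) * f q else 0)"
      by (rule sum.cong) auto
    also have "\<dots> = cnj (f p) * f p" using p by (simp add: sum.delta)
    finally show "(\<Sum>q\<in>idx d. cnj (f p) * (if p = q then 1 else 0) * f q) = cnj (f p) * f p" .
  qed
  also have "\<dots> = (\<Sum>p\<in>idx d. of_real ((cmod (f p))\<^sup>2))"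
    by (rule sum.cong[OF refl], subst complex_norm_square, simp add: mult.commute)
  finally show ?thesis by (simp add: nsq_def)
qed

lemma expect_diff: "expect d (\<lambda>p q. id_op p q - E p q) f = expect d id_op f - expect d E f"
  by (simp add: expect_def left_diff_distrib right_diff_distrib sum_subtractf)

definition comp :: "nat \<Rightarrow> (nat \<times> nat \<Rightarrow> complex) \<Rightarrow> (nat \<times> nat \<Rightarrow> complex)" where
  "comp j \<psi> p = (if min (snd p) 2 = j then \<psi> p else 0)"

lemma bob_decomp: "bob_apply x0 x1 \<psi> = (\<lambda>p. sgn_bit x0 * comp 0 \<psi> p + (sgn_bit x1 * comp 1 \<psi> p + comp 2 \<psi> p))"
  by (auto simp: bob_apply_def comp_def fun_eq_iff min_def)

lemma cnj_sgn[simp]: "cnj (sgn_bit b) = sgn_bit b"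
  by (simp add: sgn_bit_def)

lemma nsq_bob: "nsq d (bob_apply x0 x1 \<psi>) = nsq d \<psi>"
  unfolding nsq_def bob_apply_def
  by (rule sum.cong[OF refl]) (auto simp: sgn_bit_def norm_mult)

lemma nsq_decomp: "nsq d \<psi> = nsq d (comp 0 \<psi>) + nsq d (comp 1 \<psi>) + nsq d (comp 2 \<psi>)"
  unfolding nsq_def sum.distrib[symmetric]
  by (rule sum.cong[OF refl]) (auto simp: comp_def min_def)

lemma nsq_nonneg: "nsq d f \<ge> 0"
  unfolding nsq_def by (simp add: sum_nonneg)

definition G where "G d E \<psi> j k = sesq d E (comp j \<psi>) (comp k \<psi>)"

lemma expect_bob: "expect d E (bob_apply x0 x1 \<psi>) =
   sgn_bit x0 * sgn_bit x0 * G d E \<psi> 0 0 + sgn_bit x0 * sgn_bit x1 * G d E \<psi> 0 1 + sgn_bit x0 * G d E \<psi> 0 2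
 + sgn_bit x1 * sgn_bit x0 * G d E \<psi> 1 0 + sgn_bit x1 * sgn_bit x1 * G d E \<psi> 1 1 + sgn_bit x1 * G d E \<psi> 1 2
 + sgn_bit x0 * G d E \<psi> 2 0 + sgn_bit x1 * G d E \<psi> 2 1 + G d E \<psi> 2 2"
  unfolding expect_sesq bob_decomp G_def
  by (simp add: sesq_add_left sesq_add_right sesq_scale_left sesq_scale_right algebra_simps)

lemma guess_formula:
  assumes "normalized d \<psi>"
  shows "guess_prob d \<psi> E a = 1/2 - Re (G d E \<psi> (if a then 1 else 0) 2 + G d E \<psi> 2 (if a then 1 else 0))"
proof -
  have n: "\<And>x0 x1. expect d id_op (bob_apply x0 x1 \<psi>) = 1"
    using assms unfolding expect_id nsq_bob by (simp add: normalized_def nsq_def)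
  have r: "\<And>x0 x1. Re (expect d (\<lambda>p q. id_op p q - E p q) (bob_apply x0 x1 \<psi>)) = 1 - Re (expect d E (bob_apply x0 x1 \<psi>))"
    by (simp add: expect_diff n)
  have r2: "\<And>b x0 x1. Re (expect d (if b then E else (\<lambda>p q. id_op p q - E p q)) (bob_apply x0 x1 \<psi>)) = (if b then Re (expect d E (bob_apply x0 x1 \<psi>)) else 1 - Re (expect d E (bob_apply x0 x1 \<psi>)))"
    using r by simp
  show ?thesis
    unfolding guess_prob_def r2
    by (cases a) (simp add: UNIV_bool sel_def expect_bob sgn_bit_def field_simps, simp add: UNIV_bool sel_def expect_bob sgn_bit_def field_simps)
qed

lemma disc:
  fixes R X Y :: real
  assumes h: "\<And>t. 2 * t * R \<le> t\<^sup>2 * X + Y" and X: "X \<ge> 0"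
  shows "R\<^sup>2 \<le> X * Y"
proof (cases "X = 0")
  case True
  show ?thesis
  proof (cases "R = 0")
    case False
    have "2 * ((Y + 1) / (2 * R)) * R \<le> Y" using h[of "(Y+1)/(2*R)"] True by simp
    moreover have "2 * ((Y + 1) / (2 * R)) * R = Y + 1" using False by (simp add: field_simps)
    ultimately show ?thesis by simp
  qed (simp add: True)
next
  case False
  hence Xp: "X > 0" using X by simp
  have "2 * (R / X) * R \<le> (R/X)\<^sup>2 * X + Y" by (rule h)
  hence "2 * R\<^sup>2 / X \<le> R\<^sup>2 / X + Y" using Xp by (simp add: power2_eq_square field_simps)
  hence "R\<^sup>2 / X \<le> Y" by simp
  thus ?thesis using Xp by (simp add: field_simps)
qed

lemma cs:
  assumes eff: "effect d E" and dis: "\<And>p. x p = 0 \<or> y p = 0"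
  shows "(Re (sesq d E x y + sesq d E y x))\<^sup>2 \<le> nsq d x * nsq d y"
proof (rule disc)
  show "nsq d x \<ge> 0" by (rule nsq_nonneg)
  fix t :: real
  define R where "R = Re (sesq d E x y + sesq d E y x)"
  define pp where "pp = (\<lambda>p. of_real t * x p + y p)"
  define mm where "mm = (\<lambda>p. of_real t * x p - y p)"
  have ep: "expect d E pp = of_real (t\<^sup>2) * sesq d E x x + of_real t * (sesq d E x y + sesq d E y x) + sesq d E y y"
    unfolding pp_def expect_sesq
    by (simp add: sesq_add_left sesq_add_right sesq_scale_left sesq_scale_right algebra_simps power2_eq_square)
  have em: "expect d E mm = of_real (t\<^sup>2) * sesq d E x x - of_real t * (sesq d E x y + sesq d E y x) + sesq d E y y"
    unfolding mm_def expect_sesq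
    by (simp add: sesq_minus_left sesq_minus_right sesq_scale_left sesq_scale_right algebra_simps power2_eq_square)
  have "Re (expect d E mm) \<ge> 0" using eff by (simp add: effect_def psd_def)
  moreover have "Re (expect d (\<lambda>p q. id_op p q - E p q) pp) \<ge> 0" using eff by (simp add: effect_def psd_def)
  hence "Re (expect d E pp) \<le> nsq d pp" by (simp add: expect_diff expect_id)
  moreover have "nsq d pp = t\<^sup>2 * nsq d x + nsq d y"
  proof -
    have "(cmod (pp p))\<^sup>2 = t\<^sup>2 * (cmod (x p))\<^sup>2 + (cmod (y p))\<^sup>2" for p
      using dis[of p] unfolding pp_def
      by (auto simp: norm_mult power_mult_distrib)
    thus ?thesis by (simp add: nsq_def sum.distrib sum_distrib_left)
  qed
  ultimately show "2 * t * R \<le> t\<^sup>2 * nsq d x + nsq d y"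
    using ep em unfolding R_def by (simp add: algebra_simps)
qed

lemma abs_le_sqrt: fixes R c :: real assumes "R\<^sup>2 \<le> c" shows "\<bar>R\<bar> \<le> sqrt c"
  using real_sqrt_le_mono[OF assms] by simp

lemma real_bound:
  fixes pa pb p2 Ra Rb \<delta> :: real
  assumes nn: "pa \<ge> 0" "pb \<ge> 0" "p2 \<ge> 0" and s: "pa + pb + p2 = 1"
    and ca: "Ra\<^sup>2 \<le> pa * p2" and cb: "Rb\<^sup>2 \<le> pb * p2"
    and g: "1/2 - Ra \<ge> 1 - \<delta>" and d: "\<delta> \<ge> 0"
  shows "1/2 - Rb \<le> 1/2 + sqrt (\<delta> * (1 - \<delta>)) + \<delta>"
proof (cases "\<delta> \<le> 1/2")
  case True
  have "(1/2 - \<delta>)\<^sup>2 \<le> (-Ra)\<^sup>2"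
    using g True by (intro power_mono) auto
  hence "(1/2 - \<delta>)\<^sup>2 \<le> Ra\<^sup>2" by simp
  hence "(1/2 - \<delta>)\<^sup>2 \<le> pa * p2" using ca by linarith
  moreover have "pb * p2 = p2 - p2\<^sup>2 - pa * p2"
  proof -
    have "p2 * (pa + pb + p2) = p2" using s by simp
    hence "p2 * pa + p2 * pb + p2 * p2 = p2" by (simp add: distrib_left)
    thus ?thesis by (simp add: power2_eq_square mult.commute)
  qed
  moreover have "p2 - p2\<^sup>2 \<le> 1/4" using zero_le_power2[of "p2 - 1/2"] by (simp add: power2_eq_square algebra_simps)
  ultimately have "Rb\<^sup>2 \<le> \<delta> * (1 - \<delta>)" using cb by (simp add: power2_eq_square algebra_simps)
  hence "\<bar>Rb\<bar> \<le> sqrt (\<delta> * (1 - \<delta>))" by (rule abs_le_sqrt)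
  thus ?thesis using d by linarith
next
  case False
  have "pb * p2 \<le> 1/4"
  proof -
    have "4 * (pb * p2) \<le> (pb + p2)\<^sup>2" using zero_le_power2[of "pb - p2"] by (simp add: power2_eq_square algebra_simps)
    also have "\<dots> \<le> 1" using s nn by (intro power_le_one) auto
    finally show ?thesis by simp
  qed
  hence "Rb\<^sup>2 \<le> (1/2)\<^sup>2" using cb by (simp add: power2_eq_square)
  hence "\<bar>Rb\<bar> \<le> 1/2" using abs_le_sqrt[of Rb "(1/2)\<^sup>2"] by simp
  moreover have "1/2 \<le> sqrt (\<delta> * (1 - \<delta>)) + \<delta>"
  proof (cases "\<delta> \<le> 1")
    case True
    have "0 \<le> sqrt (\<delta> * (1 - \<delta>))" using True d by simp
    thus ?thesis using False by linarith
  next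
    case F2: False
    have "sqrt (\<delta> * (1 - \<delta>)) = - sqrt (\<delta> * (\<delta> - 1))"
      by (simp add: real_sqrt_minus[symmetric] algebra_simps)
    moreover have "sqrt (\<delta> * (\<delta> - 1)) \<le> \<delta> - 1/2"
      using F2 by (intro real_le_lsqrt) (auto simp: power2_eq_square algebra_simps)
    ultimately show ?thesis by linarith
  qed
  ultimately show ?thesis by linarith
qed

lemma comp_dis: "j \<noteq> k \<Longrightarrow> comp j \<psi> p = 0 \<or> comp k \<psi> p = 0"
  by (simp add: comp_def)

lemma idx1: "idx (Suc 0) = {(0,0),(0,1),(0,2)}"
  by (auto simp: idx_def)

definition E0 :: "nat \<times> nat \<Rightarrow> nat \<times> nat \<Rightarrow> complex" where
  "E0 p q = (if snd p \<in> {0,2} \<and> snd q \<in> {0,2} then (if snd p = snd q then 1/2 else -1/2) else 0)"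

definition \<psi>w :: "nat \<times> nat \<Rightarrow> complex" where
  "\<psi>w p = (if snd p = 0 \<or> snd p = 2 then complex_of_real (sqrt (1/2)) else 0)"

lemma expect_E0: "expect 1 E0 \<phi> = of_real ((cmod (\<phi> (0,0) - \<phi> (0,2)))\<^sup>2 / 2)"
proof -
  have "expect 1 E0 \<phi> = (\<phi> (0,0) - \<phi> (0,2)) * cnj (\<phi> (0,0) - \<phi> (0,2)) / 2"
    by (simp add: expect_def idx1 E0_def algebra_simps)
  also have "\<dots> = of_real ((cmod (\<phi> (0,0) - \<phi> (0,2)))\<^sup>2) / 2"
    by (simp only: complex_norm_square)
  finally show ?thesis by simp
qed

lemma nsq1: "nsq 1 \<phi> = (cmod (\<phi> (0,0)))\<^sup>2 + (cmod (\<phi> (0,1)))\<^sup>2 + (cmod (\<phi> (0,2)))\<^sup>2"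
  by (simp add: nsq_def idx1)

lemma effect_E0: "effect 1 E0"
proof -
  have "(cmod (x - y))\<^sup>2 / 2 \<le> (cmod x)\<^sup>2 + (cmod y)\<^sup>2" for x y :: complex
  proof -
    have "cmod (x - y) \<le> cmod x + cmod y" by (rule norm_triangle_ineq4)
    hence "(cmod (x - y))\<^sup>2 \<le> (cmod x + cmod y)\<^sup>2" by (intro power_mono) auto
    moreover have "(cmod x + cmod y)\<^sup>2 \<le> 2 * (cmod x)\<^sup>2 + 2 * (cmod y)\<^sup>2"
      using zero_le_power2[of "cmod x - cmod y"] by (simp add: power2_eq_square algebra_simps)
    ultimately show ?thesis by linarith
  qed
  note H = this
  show ?thesis
    unfolding effect_def psd_def
  proof (intro conjI allI)
    fix \<phi> :: "nat \<times> nat \<Rightarrow> complex"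
    show "Im (expect 1 E0 \<phi>) = 0" "0 \<le> Re (expect 1 E0 \<phi>)"
      unfolding expect_E0 by simp_all
    have e: "expect 1 (\<lambda>p q. id_op p q - E0 p q) \<phi> = of_real (nsq 1 \<phi> - (cmod (\<phi> (0,0) - \<phi> (0,2)))\<^sup>2 / 2)"
      unfolding expect_diff expect_id expect_E0 by simp
    show "Im (expect 1 (\<lambda>p q. id_op p q - E0 p q) \<phi>) = 0" unfolding e by simp
    have k: "0 \<le> (cmod (\<phi> (0,Suc 0)))\<^sup>2" by simp
    show "0 \<le> Re (expect 1 (\<lambda>p q. id_op p q - E0 p q) \<phi>)"
      unfolding e using H[of "\<phi> (0,0)" "\<phi> (0,2)"] nsq1[of \<phi>] by simp (use k in linarith)
  qed
qed

lemma nrm_w: "normalized 1 \<psi>w"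
  by (simp add: normalized_def idx1 \<psi>w_def power2_eq_square)

lemma gw1: "guess_prob 1 \<psi>w E0 False = 1"
  unfolding guess_formula[OF nrm_w] by (simp add: G_def sesq_def idx1 comp_def E0_def \<psi>w_def)

lemma gw2: "guess_prob 1 \<psi>w E0 True = 1/2"
  unfolding guess_formula[OF nrm_w] by (simp add: G_def sesq_def idx1 comp_def E0_def \<psi>w_def)

lemma part1:
  assumes d0: "\<delta> \<ge> 0" and nrm: "normalized d \<psi>"
    and E: "effect d E" and gE: "guess_prob d \<psi> E a \<ge> 1 - \<delta>" and E': "effect d E'"
  shows "guess_prob d \<psi> E' (\<not> a) \<le> 1/2 + sqrt (\<delta> * (1 - \<delta>)) + \<delta>"
proof -
  define ia :: nat where "ia = (if a then 1 else 0)"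
  define ib :: nat where "ib = (if \<not> a then 1 else 0)"
  have ga: "guess_prob d \<psi> E a = 1/2 - Re (G d E \<psi> ia 2 + G d E \<psi> 2 ia)"
    unfolding ia_def by (rule guess_formula[OF nrm])
  have gb: "guess_prob d \<psi> E' (\<not> a) = 1/2 - Re (G d E' \<psi> ib 2 + G d E' \<psi> 2 ib)"
    unfolding ib_def by (rule guess_formula[OF nrm])
  have ia2: "ia \<noteq> 2" "ib \<noteq> 2" by (auto simp: ia_def ib_def)
  have ca: "(Re (G d E \<psi> ia 2 + G d E \<psi> 2 ia))\<^sup>2 \<le> nsq d (comp ia \<psi>) * nsq d (comp 2 \<psi>)"
    unfolding G_def by (rule cs[OF E comp_dis[OF ia2(1)]])
  have cb: "(Re (G d E' \<psi> ib 2 + G d E' \<psi> 2 ib))\<^sup>2 \<le> nsq d (comp ib \<psi>) * nsq d (comp 2 \<psi>)"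
    unfolding G_def by (rule cs[OF E' comp_dis[OF ia2(2)]])
  have s: "nsq d (comp ia \<psi>) + nsq d (comp ib \<psi>) + nsq d (comp 2 \<psi>) = 1"
    using nrm nsq_decomp[of d \<psi>] unfolding normalized_def nsq_def[symmetric]
    by (cases a) (simp_all add: ia_def ib_def)
  show ?thesis unfolding gb
    by (rule real_bound[OF nsq_nonneg nsq_nonneg nsq_nonneg s ca cb _ d0]) (use gE ga in simp)
qed

theorem proposition6:
  "(\<forall>(\<delta>::real) (a::bool) (d::nat) (\<psi>::nat \<times> nat \<Rightarrow> complex).
      \<delta> \<ge> 0 \<longrightarrow> 0 < d \<longrightarrow> normalized d \<psi> \<longrightarrow>
      (\<exists>E. effect d E \<and> guess_prob d \<psi> E a \<ge> 1 - \<delta>) \<longrightarrow>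
      (\<forall>E'. effect d E' \<longrightarrow> guess_prob d \<psi> E' (\<not> a) \<le> 1/2 + sqrt (\<delta> * (1 - \<delta>)) + \<delta>))
   \<and> P_star_Alice = 1/2"
proof
  show "\<forall>(\<delta>::real) (a::bool) (d::nat) (\<psi>::nat \<times> nat \<Rightarrow> complex).
      \<delta> \<ge> 0 \<longrightarrow> 0 < d \<longrightarrow> normalized d \<psi> \<longrightarrow>
      (\<exists>E. effect d E \<and> guess_prob d \<psi> E a \<ge> 1 - \<delta>) \<longrightarrow>
      (\<forall>E'. effect d E' \<longrightarrow> guess_prob d \<psi> E' (\<not> a) \<le> 1/2 + sqrt (\<delta> * (1 - \<delta>)) + \<delta>)"
    using part1 by blast
  show "P_star_Alice = 1/2"
    unfolding P_star_Alice_def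
  proof (rule cSup_eq_maximum)
    show "1/2 \<in> {guess_prob d \<psi> E' (\<not> a) | a d \<psi> E E'.
       0 < d \<and> normalized d \<psi> \<and> effect d E \<and> guess_prob d \<psi> E a = 1 \<and> effect d E'}"
      using gw1 gw2 nrm_w effect_E0
      by (smt (verit, best) mem_Collect_eq zero_less_one)
  next
    fix x assume "x \<in> {guess_prob d \<psi> E' (\<not> a) | a d \<psi> E E'.
       0 < d \<and> normalized d \<psi> \<and> effect d E \<and> guess_prob d \<psi> E a = 1 \<and> effect d E'}"
    then obtain a d \<psi> E E' where x: "x = guess_prob d \<psi> E' (\<not> a)" and h: "normalized d \<psi>"
      "effect d E" "guess_prob d \<psi> E a = 1" "effect d E'" by blast
    show "x \<le> 1/2" using part1[of 0 d \<psi> E a E'] h x by simp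
  qed
qed

end
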